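(* Let $X$ be a Hermitian $d\times d$ matrix of rank $2$. Then $$\frac{24\,\|X\|_1^2\,\mathrm{tr}\big(P_{\mathrm{Sym}^4}X^{\otimes4}\big)}{\big(\|X\|_2^2+\mathrm{tr}(X)^2\big)^3}\le\frac5{81}\big(95+32\sqrt{10}\big)\approx12.1107 .$$ If in addition $\mathrm{tr}(X)=0$, the left-hand side equals $12$.
   Context: $P_{\mathrm{Sym}^4}$ is the orthogonal projector onto the totally symmetric subspace of $(\mathbb{C}^d)^{\otimes 4}$. $\|\cdot\|_1$, $\|\cdot\|_2$ are the trace norm and Hilbert–Schmidt norm. *)

theory Defs
  imports "Jordan_Normal_Form.Schur_Decomposition" "Jordan_Normal_Form.DL_Rank"
          "Jordan_Normal_Form.Char_Poly" "HOL-Computational_Algebra.Polynomial"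
          "HOL-Combinatorics.Permutations"
begin

text \<open>Index conventions: a basis vector of (C^d)^{tensor 4} with multi-index
  (i_0,i_1,i_2,i_3), i_k < d, is identified with the flat index
  ((i_0 d + i_1) d + i_2) d + i_3 < d^4.  digit d k i is the k-th tensor slot.\<close>

definition digit :: "nat \<Rightarrow> nat \<Rightarrow> nat \<Rightarrow> nat" where
  "digit d k i = (i div d ^ (3 - k)) mod d"

definition tensor4 :: "nat \<Rightarrow> complex mat \<Rightarrow> complex mat" where
  "tensor4 d X = mat (d^4) (d^4)
     (\<lambda>(i, j). \<Prod>k<4. X $$ (digit d k i, digit d k j))"

text \<open>Permutation operator of the tensor factors: e_{i_0..i_3} to e_{i_{pi 0}..i_{pi 3}}.\<close>
definition perm_op :: "nat \<Rightarrow> (nat \<Rightarrow> nat) \<Rightarrow> complex mat" where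
  "perm_op d \<pi> = mat (d^4) (d^4)
     (\<lambda>(i, j). if (\<forall>k<4. digit d k i = digit d (\<pi> k) j) then 1 else 0)"

definition P_Sym4 :: "nat \<Rightarrow> complex mat" where
  "P_Sym4 d = mat (d^4) (d^4) (\<lambda>(i, j).
     (1 / 24) * (\<Sum>\<pi> \<in> {\<pi>. \<pi> permutes {..<4::nat}}. perm_op d \<pi> $$ (i, j)))"

text \<open>Trace norm: sum of singular values (square roots of the eigenvalues of X^H X,
  counted with algebraic multiplicity as roots of the characteristic polynomial).\<close>
definition trace_norm :: "complex mat \<Rightarrow> real" where
  "trace_norm X = sum_mset (image_mset (\<lambda>\<mu>. sqrt (Re \<mu>))
      (proots (char_poly (mat_adjoint X * X))))"

definition hs_norm :: "complex mat \<Rightarrow> real" where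
  "hs_norm X = sqrt (\<Sum>i<dim_row X. \<Sum>j<dim_col X. (cmod (X $$ (i, j)))^2)"

definition mtrace :: "complex mat \<Rightarrow> complex" where
  "mtrace A = (\<Sum>i<dim_row A. A $$ (i, i))"

definition hermitian_mat :: "complex mat \<Rightarrow> bool" where
  "hermitian_mat X \<longleftrightarrow> mat_adjoint X = X"

end

theory Submission
  imports Defs "Jordan_Normal_Form.Jordan_Normal_Form_Uniqueness" "Jordan_Normal_Form.Jordan_Normal_Form_Existence"
begin


lemma sum_split_mult_nat:
  fixes g :: "nat \<Rightarrow> 'a::comm_monoid_add"
  shows "(\<Sum>i<m*d. g i) = (\<Sum>q<m. \<Sum>r<d. g (q*d+r))"
proof -
  have "(\<Sum>i<m*d. g i) = (\<Sum>q<m. sum g {q*d..<q*d+d})"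
    by (rule sum.nat_group[symmetric])
  also have "\<dots> = (\<Sum>q<m. \<Sum>r<d. g (q*d+r))"
  proof (rule sum.cong[OF refl])
    fix q
    have "sum g {q*d..<q*d+d} = sum g {0+q*d..<d+q*d}" by (simp add: add.commute)
    also have "\<dots> = (\<Sum>r=0..<d. g (r + q*d))" by (rule sum.shift_bounds_nat_ivl)
    finally show "sum g {q*d..<q*d+d} = (\<Sum>r<d. g (q*d+r))"
      by (simp add: atLeast0LessThan add.commute)
  qed
  finally show ?thesis .
qed

definition enc4 :: "nat \<Rightarrow> nat \<Rightarrow> nat \<Rightarrow> nat \<Rightarrow> nat \<Rightarrow> nat" where
  "enc4 d a b c e = ((a*d+b)*d+c)*d+e"

lemma sum_d4:
  fixes g :: "nat \<Rightarrow> 'a::comm_monoid_add"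
  shows "(\<Sum>i<d^4. g i) = (\<Sum>a<d. \<Sum>b<d. \<Sum>c<d. \<Sum>e<d. g (enc4 d a b c e))"
proof -
  have "d^4 = ((1*d)*d)*d*d" by (simp add: power4_eq_xxxx)
  hence "(\<Sum>i<d^4. g i) = (\<Sum>i<((1*d)*d)*d*d. g i)" by simp
  also have "\<dots> = (\<Sum>q<1. \<Sum>a<d. \<Sum>b<d. \<Sum>c<d. \<Sum>e<d. g ((((q*d+a)*d+b)*d+c)*d+e))"
    by (simp only: sum_split_mult_nat)
  also have "\<dots> = (\<Sum>a<d. \<Sum>b<d. \<Sum>c<d. \<Sum>e<d. g (enc4 d a b c e))"
    by (simp add: enc4_def)
  finally show ?thesis .
qed

lemma div_mod_helper: "(e::nat) < d \<Longrightarrow> (x*d+e) div d = x \<and> (x*d+e) mod d = e"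
  by auto

lemma digit_enc4:
  assumes "a < d" "b < d" "c < d" "e < d"
  shows "digit d 0 (enc4 d a b c e) = a" "digit d 1 (enc4 d a b c e) = b"
        "digit d 2 (enc4 d a b c e) = c" "digit d 3 (enc4 d a b c e) = e"
proof -
  have d0: "0 < d" using assms by auto
  have e1: "enc4 d a b c e div d = (a*d+b)*d+c" using assms by (simp add: enc4_def)
  have e2: "enc4 d a b c e div d^2 = a*d+b"
  proof -
    have "enc4 d a b c e div d^2 = enc4 d a b c e div d div d"
      by (simp add: power2_eq_square div_mult2_eq)
    thus ?thesis using e1 assms by simp
  qed
  have e3: "enc4 d a b c e div d^3 = a"
  proof -
    have "d^3 = d * d^2" by (simp add: power3_eq_cube power2_eq_square)
    hence "enc4 d a b c e div d^3 = (enc4 d a b c e div d) div d^2"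
      by (simp add: div_mult2_eq)
    also have "\<dots> = ((a*d+b)*d+c) div d div d" using e1
      by (simp add: power2_eq_square div_mult2_eq)
    also have "\<dots> = a" using assms by simp
    finally show ?thesis .
  qed
  show "digit d 0 (enc4 d a b c e) = a" using e3 assms by (simp add: digit_def)
  show "digit d 1 (enc4 d a b c e) = b" using e2 assms by (simp add: digit_def)
  show "digit d 2 (enc4 d a b c e) = c" using e1 assms by (simp add: digit_def)
  show "digit d 3 (enc4 d a b c e) = e" using assms by (simp add: digit_def enc4_def)
qed


lemma digit_enc4_nth:
  assumes "a < d" "b < d" "c < d" "e < d" "k < 4"
  shows "digit d k (enc4 d a b c e) = [a,b,c,e] ! k"
proof -
  have "k = 0 \<or> k = 1 \<or> k = 2 \<or> k = 3" using assms(5) by auto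
  thus ?thesis using digit_enc4[OF assms(1-4)] by auto
qed

lemma all_less_4: "(\<forall>k<(4::nat). P k) \<longleftrightarrow> P 0 \<and> P 1 \<and> P 2 \<and> P 3"
  by (auto simp: numeral_eq_Suc less_Suc_eq)

lemma digit_less: "0 < d \<Longrightarrow> digit d k i < d"
  by (simp add: digit_def)

lemma sum_digit_delta:
  fixes f :: "nat \<Rightarrow> 'a::comm_monoid_add"
  assumes w: "\<And>k. k < 4 \<Longrightarrow> w k < d"
  shows "(\<Sum>i<d^4. if (\<forall>k<4. digit d k i = w k) then f i else 0)
       = f (enc4 d (w 0) (w 1) (w 2) (w 3))"
proof -
  have w0: "w 0 < d" and w1: "w 1 < d" and w2: "w 2 < d" and w3: "w 3 < d" using w by auto
  have "(\<Sum>i<d^4. if (\<forall>k<4. digit d k i = w k) then f i else 0)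
      = (\<Sum>a<d. \<Sum>b<d. \<Sum>c<d. \<Sum>e<d.
           if (\<forall>k<4. digit d k (enc4 d a b c e) = w k) then f (enc4 d a b c e) else 0)"
    by (rule sum_d4)
  also have "\<dots> = (\<Sum>a<d. \<Sum>b<d. \<Sum>c<d. \<Sum>e<d.
           if e = w 3 then (if c = w 2 then (if b = w 1 then (if a = w 0 then f (enc4 d a b c e) else 0) else 0) else 0) else 0)"
    by (intro sum.cong refl, simp only: all_less_4 lessThan_iff digit_enc4, auto)
  also have "\<dots> = f (enc4 d (w 0) (w 1) (w 2) (w 3))"
    using w0 w1 w2 w3 by (simp add: sum.delta)
  finally show ?thesis .
qed


lemma lt_mul_add: "(x::nat) < m \<Longrightarrow> e < d \<Longrightarrow> x*d+e < m*d"
proof -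
  assume "x < m" "e < d"
  hence "x*d+e < (x+1)*d" by simp
  also have "\<dots> \<le> m*d" using \<open>x < m\<close> by (intro mult_right_mono) auto
  finally show ?thesis .
qed

lemma enc4_less: assumes "a < d" "b < d" "c < d" "e < d" shows "enc4 d a b c e < d^4"
proof -
  have "a*d+b < d*d" using assms by (intro lt_mul_add)
  hence "(a*d+b)*d+c < (d*d)*d" using assms by (intro lt_mul_add)
  hence "((a*d+b)*d+c)*d+e < ((d*d)*d)*d" using assms by (intro lt_mul_add)
  thus ?thesis by (simp add: enc4_def power4_eq_xxxx)
qed

lemma digit_enc4_w:
  assumes "\<And>k. k < 4 \<Longrightarrow> w k < d" "k < 4"
  shows "digit d k (enc4 d (w 0) (w 1) (w 2) (w 3)) = w k"
proof -
  have "k = 0 \<or> k = 1 \<or> k = 2 \<or> k = 3" using assms(2) by auto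
  thus ?thesis using digit_enc4[of "w 0" d "w 1" "w 2" "w 3"] assms(1) by auto
qed

definition FF :: "complex mat \<Rightarrow> nat \<Rightarrow> (nat \<Rightarrow> nat) \<Rightarrow> complex" where
  "FF X d \<pi> = (\<Sum>a<d. \<Sum>b<d. \<Sum>c<d. \<Sum>e<d.
      \<Prod>k<4. X $$ ([a,b,c,e] ! k, [a,b,c,e] ! (\<pi> k)))"

lemma perm4_less: "\<pi> permutes {..<4::nat} \<Longrightarrow> k < 4 \<Longrightarrow> \<pi> k < 4"
  using permutes_in_image[of \<pi> "{..<4}" k] by simp

lemma inner_sum_i:
  assumes d: "0 < d" and p: "\<pi> permutes {..<4::nat}" and j: "j < d^4"
  shows "(\<Sum>i<d^4. if (\<forall>k<4. digit d k i = digit d (\<pi> k) j) then tensor4 d X $$ (j, i) else 0)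
     = (\<Prod>k<4. X $$ (digit d k j, digit d (\<pi> k) j))"
proof -
  define w where "w k = digit d (\<pi> k) j" for k
  have w: "\<And>k. k < 4 \<Longrightarrow> w k < d" unfolding w_def using d digit_less by auto
  have "(\<Sum>i<d^4. if (\<forall>k<4. digit d k i = digit d (\<pi> k) j) then tensor4 d X $$ (j, i) else 0)
      = (\<Sum>i<d^4. if (\<forall>k<4. digit d k i = w k) then tensor4 d X $$ (j, i) else 0)"
    unfolding w_def ..
  also have "\<dots> = tensor4 d X $$ (j, enc4 d (w 0) (w 1) (w 2) (w 3))"
    by (rule sum_digit_delta[OF w])
  also have "\<dots> = (\<Prod>k<4. X $$ (digit d k j, digit d k (enc4 d (w 0) (w 1) (w 2) (w 3))))"
    unfolding tensor4_def using j w by (simp add: enc4_less)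
  also have "\<dots> = (\<Prod>k<4. X $$ (digit d k j, w k))"
  proof (intro prod.cong refl)
    fix k assume "k \<in> {..<4::nat}"
    hence k: "k < 4" by simp
    show "X $$ (digit d k j, digit d k (enc4 d (w 0) (w 1) (w 2) (w 3))) = X $$ (digit d k j, w k)"
      by (simp only: digit_enc4_w[where w=w and d=d and k=k, OF w k])
  qed
  finally show ?thesis unfolding w_def .
qed

lemma sum_swap3: "(\<Sum>i\<in>A. \<Sum>j\<in>B. \<Sum>p\<in>C. g i j p) = (\<Sum>p\<in>C. \<Sum>j\<in>B. \<Sum>i\<in>A. g i j p)"
proof -
  have "(\<Sum>i\<in>A. \<Sum>j\<in>B. \<Sum>p\<in>C. g i j p) = (\<Sum>i\<in>A. \<Sum>p\<in>C. \<Sum>j\<in>B. g i j p)"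
    by (rule sum.cong[OF refl], rule sum.swap)
  also have "\<dots> = (\<Sum>p\<in>C. \<Sum>i\<in>A. \<Sum>j\<in>B. g i j p)" by (rule sum.swap)
  also have "\<dots> = (\<Sum>p\<in>C. \<Sum>j\<in>B. \<Sum>i\<in>A. g i j p)"
    by (rule sum.cong[OF refl], rule sum.swap)
  finally show ?thesis .
qed

lemma FF_eq:
  assumes d: "0 < d" and p: "\<pi> permutes {..<4::nat}"
  shows "(\<Sum>j<d^4. \<Prod>k<4. X $$ (digit d k j, digit d (\<pi> k) j)) = FF X d \<pi>"
  unfolding FF_def sum_d4
proof (intro sum.cong refl prod.cong)
  fix a b c e k assume "a \<in> {..<d}" "b \<in> {..<d}" "c \<in> {..<d}" "e \<in> {..<d}" "k \<in> {..<4::nat}"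
  hence abce: "a < d" "b < d" "c < d" "e < d" and k: "k < 4" by auto
  have pk: "\<pi> k < 4" using perm4_less[OF p k] .
  show "X $$ (digit d k (enc4 d a b c e), digit d (\<pi> k) (enc4 d a b c e))
      = X $$ ([a,b,c,e] ! k, [a,b,c,e] ! (\<pi> k))"
    by (simp only: digit_enc4_nth[OF abce k] digit_enc4_nth[OF abce pk])
qed

lemma trace_PSym:
  assumes d: "0 < d"
  shows "mtrace (P_Sym4 d * tensor4 d X) = (\<Sum>\<pi>\<in>{\<pi>. \<pi> permutes {..<4::nat}}. FF X d \<pi>) / 24"
proof -
  let ?P = "{\<pi>. \<pi> permutes {..<4::nat}}"
  let ?T = "tensor4 d X"
  let ?c = "\<lambda>\<pi> i j. (\<forall>k<4. digit d k i = digit d (\<pi> k) j)"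
  have 1: "mtrace (P_Sym4 d * ?T) = (\<Sum>i<d^4. \<Sum>j<d^4. P_Sym4 d $$ (i,j) * ?T $$ (j,i))"
    unfolding mtrace_def
    by (rule sum.cong, simp add: P_Sym4_def, simp add: P_Sym4_def tensor4_def scalar_prod_def atLeast0LessThan)
  also have "\<dots> = (\<Sum>i<d^4. \<Sum>j<d^4. \<Sum>\<pi>\<in>?P. (if ?c \<pi> i j then ?T $$ (j,i) else 0) / 24)"
    by (intro sum.cong refl) (auto simp: P_Sym4_def perm_op_def sum_divide_distrib sum_distrib_right intro!: sum.cong)
  also have "\<dots> = (\<Sum>\<pi>\<in>?P. \<Sum>j<d^4. \<Sum>i<d^4. (if ?c \<pi> i j then ?T $$ (j,i) else 0) / 24)"
    by (rule sum_swap3)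
  also have "\<dots> = (\<Sum>\<pi>\<in>?P. FF X d \<pi> / 24)"
  proof (intro sum.cong refl)
    fix \<pi> assume "\<pi> \<in> ?P"
    hence p: "\<pi> permutes {..<4}" by simp
    have "(\<Sum>j<d^4. \<Sum>i<d^4. (if ?c \<pi> i j then ?T $$ (j,i) else 0) / 24)
        = (\<Sum>j<d^4. (\<Sum>i<d^4. (if ?c \<pi> i j then ?T $$ (j,i) else 0)) / 24)"
      by (simp add: sum_divide_distrib)
    also have "\<dots> = (\<Sum>j<d^4. (\<Prod>k<4. X $$ (digit d k j, digit d (\<pi> k) j)) / 24)"
      by (intro sum.cong refl, simp only: inner_sum_i[OF d p] lessThan_iff)
    also have "\<dots> = FF X d \<pi> / 24"
      by (simp only: sum_divide_distrib[symmetric] FF_eq[OF d p])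
    finally show "(\<Sum>j<d^4. \<Sum>i<d^4. (if ?c \<pi> i j then ?T $$ (j,i) else 0) / 24) = FF X d \<pi> / 24" .
  qed
  also have "\<dots> = (\<Sum>\<pi>\<in>?P. FF X d \<pi>) / 24" by (simp add: sum_divide_distrib)
  finally show ?thesis .
qed



lemma prod_less_4: "(\<Prod>k<(4::nat). f k) = f 0 * f 1 * f 2 * f 3"
  by (simp add: numeral_eq_Suc mult_ac)

lemma set4: "{..<4::nat} = insert 0 (insert 1 (insert 2 (insert 3 {})))" by auto

definition G :: "complex mat \<Rightarrow> nat \<Rightarrow> nat \<Rightarrow> nat \<Rightarrow> nat \<Rightarrow> nat \<Rightarrow> complex" where
  "G X d i0 i1 i2 i3 = (\<Sum>a<d. \<Sum>b<d. \<Sum>c<d. \<Sum>e<d.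
     X$$(a,[a,b,c,e]!i0) * X$$(b,[a,b,c,e]!i1) * X$$(c,[a,b,c,e]!i2) * X$$(e,[a,b,c,e]!i3))"

lemma FF_G: "FF X d \<pi> = G X d (\<pi> 0) (\<pi> 1) (\<pi> 2) (\<pi> 3)"
  unfolding FF_def G_def prod_less_4 by simp

lemma perm_sum_expand:
  fixes g :: "nat \<Rightarrow> nat \<Rightarrow> nat \<Rightarrow> nat \<Rightarrow> 'a::comm_monoid_add"
  shows "(\<Sum>\<pi>\<in>{\<pi>. \<pi> permutes {..<4::nat}}. g (\<pi> 0) (\<pi> 1) (\<pi> 2) (\<pi> 3)) =
    g 0 1 2 3 + g 0 1 3 2 + (g 0 2 1 3 + g 0 2 3 1 + (g 0 3 2 1 + g 0 3 1 2)) +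
    (g 1 0 2 3 + g 1 0 3 2 + (g 1 2 0 3 + g 1 2 3 0 + (g 1 3 2 0 + g 1 3 0 2)) +
     (g 2 1 0 3 + g 2 1 3 0 + (g 2 0 1 3 + g 2 0 3 1 + (g 2 3 0 1 + g 2 3 1 0)) +
      (g 3 1 2 0 + g 3 1 0 2 + (g 3 2 1 0 + g 3 2 0 1 + (g 3 0 2 1 + g 3 0 1 2)))))"
  unfolding set4
  by (simp add: sum_over_permutations_insert)

definition tr1 :: "complex mat \<Rightarrow> nat \<Rightarrow> complex" where
  "tr1 X d = (\<Sum>a<d. X$$(a,a))"
definition tr2 :: "complex mat \<Rightarrow> nat \<Rightarrow> complex" where
  "tr2 X d = (\<Sum>a<d. \<Sum>b<d. X$$(a,b) * X$$(b,a))"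
definition tr3 :: "complex mat \<Rightarrow> nat \<Rightarrow> complex" where
  "tr3 X d = (\<Sum>a<d. \<Sum>b<d. \<Sum>c<d. X$$(a,b) * X$$(b,c) * X$$(c,a))"
definition tr4 :: "complex mat \<Rightarrow> nat \<Rightarrow> complex" where
  "tr4 X d = (\<Sum>a<d. \<Sum>b<d. \<Sum>c<d. \<Sum>e<d. X$$(a,b) * X$$(b,c) * X$$(c,e) * X$$(e,a))"

lemma nth4: "[a,b,c,e]!0 = a" "[a,b,c,e]!1 = b" "[a,b,c,e]!2 = c" "[a,b,c,e]!3 = e"
  by (simp_all add: numeral_eq_Suc)

lemma sw0: "(\<Sum>a<d. \<Sum>b<d. \<Sum>c<d. \<Sum>e<d. f a b c e) = (\<Sum>b<(d::nat). \<Sum>a<d. \<Sum>c<d. \<Sum>e<d. (f a b c e::complex))"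
  by (rule sum.swap)
lemma sw1: "(\<Sum>a<d. \<Sum>b<d. \<Sum>c<d. \<Sum>e<d. f a b c e) = (\<Sum>a<(d::nat). \<Sum>c<d. \<Sum>b<d. \<Sum>e<d. (f a b c e::complex))"
  by (rule sum.cong[OF refl], rule sum.swap)
lemma sw2: "(\<Sum>a<d. \<Sum>b<d. \<Sum>c<d. \<Sum>e<d. f a b c e) = (\<Sum>a<(d::nat). \<Sum>b<d. \<Sum>e<d. \<Sum>c<d. (f a b c e::complex))"
  by (rule sum.cong[OF refl], rule sum.cong[OF refl], rule sum.swap)

lemma tr22: "tr2 X d * tr2 X d = (\<Sum>a<d. \<Sum>b<d. \<Sum>c<d. \<Sum>e<d. X$$(a,b)*X$$(b,a)*(X$$(c,e)*X$$(e,c)))"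
  unfolding tr2_def by (simp only: sum_distrib_right) (simp only: sum_distrib_left)

lemma G_0123: "G X d 0 1 2 3 = tr1 X d * tr1 X d * tr1 X d * tr1 X d"
  unfolding G_def apply (simp only: nth4)
  by (simp add: tr1_def tr2_def tr3_def tr4_def sum_distrib_left sum_distrib_right mult_ac)

lemma G_0132: "G X d 0 1 3 2 = tr2 X d * tr1 X d * tr1 X d"
  unfolding G_def apply (simp only: nth4) apply (subst sw1) apply (subst sw0) apply (subst sw2) apply (subst sw1)
  by (simp add: tr1_def tr2_def tr3_def tr4_def sum_distrib_left sum_distrib_right mult_ac)

lemma G_0213: "G X d 0 2 1 3 = tr2 X d * tr1 X d * tr1 X d"
  unfolding G_def apply (simp only: nth4) apply (subst sw0) apply (subst sw1)
  by (simp add: tr1_def tr2_def tr3_def tr4_def sum_distrib_left sum_distrib_right mult_ac)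

lemma G_0231: "G X d 0 2 3 1 = tr3 X d * tr1 X d"
  unfolding G_def apply (simp only: nth4) apply (subst sw0) apply (subst sw1) apply (subst sw2)
  by (simp add: tr1_def tr2_def tr3_def tr4_def sum_distrib_left sum_distrib_right mult_ac)

lemma G_0312: "G X d 0 3 1 2 = tr3 X d * tr1 X d"
  unfolding G_def apply (simp only: nth4) apply (subst sw0) apply (subst sw1) apply (subst sw0) apply (subst sw2)
  by (simp add: tr1_def tr2_def tr3_def tr4_def sum_distrib_left sum_distrib_right mult_ac)

lemma G_0321: "G X d 0 3 2 1 = tr2 X d * tr1 X d * tr1 X d"
  unfolding G_def apply (simp only: nth4) apply (subst sw0) apply (subst sw2) apply (subst sw1)
  by (simp add: tr1_def tr2_def tr3_def tr4_def sum_distrib_left sum_distrib_right mult_ac)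

lemma G_1023: "G X d 1 0 2 3 = tr2 X d * tr1 X d * tr1 X d"
  unfolding G_def apply (simp only: nth4)
  by (simp add: tr1_def tr2_def tr3_def tr4_def sum_distrib_left sum_distrib_right mult_ac)

lemma G_1032: "G X d 1 0 3 2 = tr2 X d * tr2 X d"
  unfolding G_def apply (simp only: nth4)
  by (simp only: tr22) (simp add: mult_ac)

lemma G_1203: "G X d 1 2 0 3 = tr3 X d * tr1 X d"
  unfolding G_def apply (simp only: nth4)
  by (simp add: tr1_def tr2_def tr3_def tr4_def sum_distrib_left sum_distrib_right mult_ac)

lemma G_1230: "G X d 1 2 3 0 = tr4 X d"
  unfolding G_def apply (simp only: nth4)
  by (simp add: tr1_def tr2_def tr3_def tr4_def sum_distrib_left sum_distrib_right mult_ac)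

lemma G_1302: "G X d 1 3 0 2 = tr4 X d"
  unfolding G_def apply (simp only: nth4) apply (subst sw2)
  by (simp add: tr1_def tr2_def tr3_def tr4_def sum_distrib_left sum_distrib_right mult_ac)

lemma G_1320: "G X d 1 3 2 0 = tr3 X d * tr1 X d"
  unfolding G_def apply (simp only: nth4) apply (subst sw2)
  by (simp add: tr1_def tr2_def tr3_def tr4_def sum_distrib_left sum_distrib_right mult_ac)

lemma G_2013: "G X d 2 0 1 3 = tr3 X d * tr1 X d"
  unfolding G_def apply (simp only: nth4) apply (subst sw0)
  by (simp add: tr1_def tr2_def tr3_def tr4_def sum_distrib_left sum_distrib_right mult_ac)

lemma G_2031: "G X d 2 0 3 1 = tr4 X d"
  unfolding G_def apply (simp only: nth4) apply (subst sw0)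
  by (simp add: tr1_def tr2_def tr3_def tr4_def sum_distrib_left sum_distrib_right mult_ac)

lemma G_2103: "G X d 2 1 0 3 = tr2 X d * tr1 X d * tr1 X d"
  unfolding G_def apply (simp only: nth4) apply (subst sw1)
  by (simp add: tr1_def tr2_def tr3_def tr4_def sum_distrib_left sum_distrib_right mult_ac)

lemma G_2130: "G X d 2 1 3 0 = tr3 X d * tr1 X d"
  unfolding G_def apply (simp only: nth4) apply (subst sw1) apply (subst sw2)
  by (simp add: tr1_def tr2_def tr3_def tr4_def sum_distrib_left sum_distrib_right mult_ac)

lemma G_2301: "G X d 2 3 0 1 = tr2 X d * tr2 X d"
  unfolding G_def apply (simp only: nth4) apply (subst sw1)
  by (simp only: tr22) (simp add: mult_ac)

lemma G_2310: "G X d 2 3 1 0 = tr4 X d"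
  unfolding G_def apply (simp only: nth4) apply (subst sw1)
  by (simp add: tr1_def tr2_def tr3_def tr4_def sum_distrib_left sum_distrib_right mult_ac)

lemma G_3012: "G X d 3 0 1 2 = tr4 X d"
  unfolding G_def apply (simp only: nth4) apply (subst sw0) apply (subst sw2)
  by (simp add: tr1_def tr2_def tr3_def tr4_def sum_distrib_left sum_distrib_right mult_ac)

lemma G_3021: "G X d 3 0 2 1 = tr3 X d * tr1 X d"
  unfolding G_def apply (simp only: nth4) apply (subst sw0) apply (subst sw2)
  by (simp add: tr1_def tr2_def tr3_def tr4_def sum_distrib_left sum_distrib_right mult_ac)

lemma G_3102: "G X d 3 1 0 2 = tr3 X d * tr1 X d"
  unfolding G_def apply (simp only: nth4) apply (subst sw1) apply (subst sw0) apply (subst sw2)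
  by (simp add: tr1_def tr2_def tr3_def tr4_def sum_distrib_left sum_distrib_right mult_ac)

lemma G_3120: "G X d 3 1 2 0 = tr2 X d * tr1 X d * tr1 X d"
  unfolding G_def apply (simp only: nth4) apply (subst sw2) apply (subst sw1)
  by (simp add: tr1_def tr2_def tr3_def tr4_def sum_distrib_left sum_distrib_right mult_ac)

lemma G_3201: "G X d 3 2 0 1 = tr4 X d"
  unfolding G_def apply (simp only: nth4) apply (subst sw0) apply (subst sw1)
  by (simp add: tr1_def tr2_def tr3_def tr4_def sum_distrib_left sum_distrib_right mult_ac)

lemma G_3210: "G X d 3 2 1 0 = tr2 X d * tr2 X d"
  unfolding G_def apply (simp only: nth4) apply (subst sw0) apply (subst sw1)
  by (simp only: tr22) (simp add: mult_ac)


lemma sum_FF: "(\<Sum>\<pi>\<in>{\<pi>. \<pi> permutes {..<4::nat}}. FF X d \<pi>) =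
  tr1 X d ^ 4 + 6 * tr1 X d ^ 2 * tr2 X d + 3 * tr2 X d ^ 2 + 8 * tr1 X d * tr3 X d + 6 * tr4 X d"
  unfolding FF_G perm_sum_expand[of "G X d"]
  by (simp only: G_0123 G_0132 G_0213 G_0231 G_0312 G_0321 G_1023 G_1032 G_1203 G_1230 G_1302 G_1320
     G_2013 G_2031 G_2103 G_2130 G_2301 G_2310 G_3012 G_3021 G_3102 G_3120 G_3201 G_3210)
    (simp add: algebra_simps power2_eq_square power4_eq_xxxx)



lemma rank_nullity_mat:
  fixes X :: "'a::field mat"
  assumes X: "X \<in> carrier_mat n n"
  shows "vec_space.rank n X + kernel_dim X = n"
proof -
  interpret VS: vec_space "TYPE('a)" n .
  define T where "T = (\<lambda>v. X *\<^sub>v v)"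
  have hom: "T \<in> LinearCombinations.module_hom class_ring VS.V VS.V"
    unfolding LinearCombinations.module_hom_def T_def using X
    by (auto simp: mult_add_distrib_mat_vec mult_mat_vec)
  interpret LM: linear_map class_ring VS.V VS.V T
    by (unfold_locales) (rule hom)
  have cols: "set (cols X) \<subseteq> carrier_vec n" using X by (auto simp: cols_def)
  have im: "LM.imT = VS.span (set (cols X))"
  proof -
    have "VS.span (set (cols X)) = VS.span_list (cols X)"
      by (rule VS.span_list_as_span[OF cols, symmetric])
    also have "\<dots> = {X *\<^sub>v v | v. v \<in> carrier_vec n}"
    proof -
      have dd: "\<forall>w\<in>set (cols X). dim_vec w = n" using cols by auto
      have m: "mat_of_cols n (cols X) = X" using mat_of_cols_cols[of X] X by simp
      have l: "\<And>c. VS.lincomb_list c (cols X) = X *\<^sub>v vec n c"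
        using VS.lincomb_list_as_mat_mult[OF dd] m X by simp
      have ex: "\<exists>c. X *\<^sub>v v = X *\<^sub>v vec n c" if v: "v \<in> carrier_vec n" for v
      proof -
        have "vec n (\<lambda>i. v $ i) = v" using v by auto
        thus ?thesis by metis
      qed
      show ?thesis unfolding VS.span_list_def l using ex by auto
    qed
    also have "\<dots> = LM.imT" unfolding LM.im_def unfolding T_def by auto
    finally show ?thesis by simp
  qed
  have ker: "LM.kerT = mat_kernel X"
    unfolding LM.ker_def unfolding T_def mat_kernel_def using X by auto
  from LM.rank_nullity_main(1)[OF VS.fin_dim]
  have "vectorspace.dim class_ring (VS.vs LM.imT) + vectorspace.dim class_ring (VS.vs LM.kerT) = VS.dim" .
  moreover have "VS.dim = n" by (rule VS.dim_is_n)
  moreover have "vectorspace.dim class_ring (VS.vs LM.imT) = vec_space.rank n X"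
    unfolding im VS.rank_def ..
  moreover have "vectorspace.dim class_ring (VS.vs LM.kerT) = kernel_dim X"
  proof -
    interpret K: kernel n n X by (unfold_locales, rule X)
    show ?thesis unfolding ker using X by (simp add: kernel_dim_def)
  qed
  ultimately show ?thesis by simp
qed


lemma herm_entry:
  assumes X: "X \<in> carrier_mat d d" and H: "hermitian_mat X" and i: "i < d" and j: "j < d"
  shows "X $$ (i,j) = cnj (X $$ (j,i))"
proof -
  have "mat_adjoint X $$ (i,j) = cnj (X $$ (j,i))"
    using X i j unfolding mat_adjoint_def by (simp add: mat_of_rows_def)
  thus ?thesis using H unfolding hermitian_mat_def by simp
qed

lemma mult_mat_vec_index_sum:
  assumes X: "X \<in> carrier_mat d d" and w: "w \<in> carrier_vec d" and j: "j < d"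
  shows "(X *\<^sub>v w) $ j = (\<Sum>i<d. X $$ (j,i) * w $ i)"
  using X w j by (simp add: mult_mat_vec_def scalar_prod_def atLeast0LessThan)

lemma herm_adj:
  assumes X: "X \<in> carrier_mat d d" and H: "hermitian_mat X"
    and u: "u \<in> carrier_vec d" and w: "w \<in> carrier_vec d"
  shows "(\<Sum>j<d. cnj (u$j) * (X *\<^sub>v w)$j) = (\<Sum>i<d. cnj ((X *\<^sub>v u)$i) * w$i)"
proof -
  have "(\<Sum>j<d. cnj (u$j) * (X *\<^sub>v w)$j) = (\<Sum>j<d. \<Sum>i<d. cnj (u$j) * X $$ (j,i) * w $ i)"
    by (intro sum.cong refl) (simp add: mult_mat_vec_index_sum[OF X w] sum_distrib_left mult.assoc)
  also have "\<dots> = (\<Sum>i<d. \<Sum>j<d. cnj (u$j) * X $$ (j,i) * w $ i)" by (rule sum.swap)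
  also have "\<dots> = (\<Sum>i<d. cnj ((X *\<^sub>v u)$i) * w$i)"
  proof (intro sum.cong refl)
    fix i assume i: "i \<in> {..<d}"
    have "cnj ((X *\<^sub>v u)$i) = (\<Sum>j<d. cnj (X $$ (i,j)) * cnj (u $ j))"
      using i by (simp add: mult_mat_vec_index_sum[OF X u])
    also have "\<dots> = (\<Sum>j<d. X $$ (j,i) * cnj (u $ j))"
      using i herm_entry[OF X H] by (intro sum.cong refl) (metis complex_cnj_cnj lessThan_iff)
    finally have c: "cnj ((X *\<^sub>v u)$i) = (\<Sum>j<d. X $$ (j,i) * cnj (u $ j))" .
    show "(\<Sum>j<d. cnj (u$j) * X $$ (j,i) * w $ i) = cnj ((X *\<^sub>v u)$i) * w$i"
      unfolding c sum_distrib_right by (simp add: mult_ac)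
  qed
  finally show ?thesis .
qed

lemma sum_cnj_self_zero:
  fixes w :: "complex vec"
  assumes "(\<Sum>i<d. cnj (w$i) * w$i) = 0" "i < d"
  shows "w $ i = 0"
proof -
  have "(\<Sum>i<d. cnj (w$i) * w$i) = (\<Sum>i<d. complex_of_real ((cmod (w$i))^2))"
    by (intro sum.cong refl) (metis complex_norm_square mult.commute of_real_power)
  also have "\<dots> = complex_of_real (\<Sum>i<d. (cmod (w$i))^2)" by simp
  finally have "(\<Sum>i<d. cnj (w$i) * w$i) = complex_of_real (\<Sum>i<d. (cmod (w$i))^2)" .
  hence "complex_of_real (\<Sum>i<d. (cmod (w$i))^2) = 0" using assms(1) by metis
  hence "(\<Sum>i<d. (cmod (w$i))^2) = 0" by (simp only: of_real_eq_0_iff)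
  hence "\<forall>i\<in>{..<d}. (cmod (w$i))^2 = 0"
    by (subst sum_nonneg_eq_0_iff[symmetric]) auto
  thus ?thesis using assms(2) by simp
qed

lemma herm_sq_kernel:
  assumes X: "X \<in> carrier_mat d d" and H: "hermitian_mat X" and v: "v \<in> carrier_vec d"
    and z: "X *\<^sub>v (X *\<^sub>v v) = 0\<^sub>v d"
  shows "X *\<^sub>v v = 0\<^sub>v d"
proof -
  have Xv: "X *\<^sub>v v \<in> carrier_vec d" using X v by simp
  have "(\<Sum>i<d. cnj ((X *\<^sub>v v)$i) * (X *\<^sub>v v)$i) = (\<Sum>j<d. cnj (v$j) * (X *\<^sub>v (X *\<^sub>v v))$j)"
    by (rule herm_adj[OF X H v Xv, symmetric])
  also have "\<dots> = 0" using z by simp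
  finally have 0: "(\<Sum>i<d. cnj ((X *\<^sub>v v)$i) * (X *\<^sub>v v)$i) = 0" .
  show ?thesis
    by (rule eq_vecI) (use X Xv sum_cnj_self_zero[OF 0] in auto)
qed

lemma herm_pow_kernel:
  assumes X: "X \<in> carrier_mat d d" and H: "hermitian_mat X"
  shows "k \<ge> 1 \<Longrightarrow> v \<in> carrier_vec d \<Longrightarrow> (X ^\<^sub>m k) *\<^sub>v v = 0\<^sub>v d \<Longrightarrow> X *\<^sub>v v = 0\<^sub>v d"
proof (induction k arbitrary: v)
  case 0 then show ?case by simp
next
  case (Suc k)
  show ?case
  proof (cases "k = 0")
    case True
    then show ?thesis using Suc X by simp
  next
    case False
    have Xv: "X *\<^sub>v v \<in> carrier_vec d" using X Suc by simp
    have Xk: "X ^\<^sub>m k \<in> carrier_mat d d" using X by simp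
    have "(X ^\<^sub>m Suc k) *\<^sub>v v = (X ^\<^sub>m k * X) *\<^sub>v v" by simp
    also have "\<dots> = (X ^\<^sub>m k) *\<^sub>v (X *\<^sub>v v)"
      by (rule assoc_mult_mat_vec[OF Xk X Suc.prems(2)])
    finally have "(X ^\<^sub>m k) *\<^sub>v (X *\<^sub>v v) = (X ^\<^sub>m Suc k) *\<^sub>v v" by simp
    hence "X *\<^sub>v (X *\<^sub>v v) = 0\<^sub>v d" using Suc.IH[OF _ Xv] False Suc by simp
    thus ?thesis by (rule herm_sq_kernel[OF X H Suc.prems(2)])
  qed
qed

lemma herm_eig_real:
  assumes X: "X \<in> carrier_mat d d" and H: "hermitian_mat X" and e: "eigenvalue X e"
  shows "cnj e = e"
proof -
  from e obtain v where v: "v \<in> carrier_vec d" "v \<noteq> 0\<^sub>v d" "X *\<^sub>v v = e \<cdot>\<^sub>v v"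
    unfolding eigenvalue_def eigenvector_def using X by auto
  define N where "N = (\<Sum>i<d. cnj (v$i) * v$i)"
  have "(\<Sum>j<d. cnj (v$j) * (X *\<^sub>v v)$j) = (\<Sum>i<d. cnj ((X *\<^sub>v v)$i) * v$i)"
    by (rule herm_adj[OF X H v(1) v(1)])
  hence "(\<Sum>j<d. cnj (v$j) * (e * v$j)) = (\<Sum>i<d. cnj (e * v$i) * v$i)"
    using v by simp
  hence "e * N = cnj e * N" unfolding N_def by (simp add: sum_distrib_left mult_ac)
  moreover have "N \<noteq> 0"
  proof
    assume "N = 0"
    hence "\<And>i. i < d \<Longrightarrow> v $ i = 0" using sum_cnj_self_zero unfolding N_def by blast
    hence "v = 0\<^sub>v d" using v by (intro eq_vecI) auto
    thus False using v by simp
  qed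
  ultimately show ?thesis by simp
qed


definition jes :: "(nat \<times> complex) list \<Rightarrow> complex list" where
  "jes n_as = concat (map (\<lambda>(n,a). replicate n a) n_as)"

lemma jes_prod: "(\<Prod>(n,a)\<leftarrow>n_as. [:- a, 1:] ^ n) = (\<Prod>e\<leftarrow>jes n_as. [:- e, 1:])"
  unfolding jes_def by (induction n_as) (auto simp: prod_list_replicate)

lemma jes_count0: "length (filter (\<lambda>e. e = 0) (jes n_as)) = sum_list (map fst [(n, e)\<leftarrow>n_as . e = 0])"
  unfolding jes_def by (induction n_as) auto

lemma jes_le: "(n,a) \<in> set n_as \<Longrightarrow> n \<le> length (jes n_as)"
  unfolding jes_def by (induction n_as) auto

lemma sum_list_min_eq: "(\<forall>n\<in>set ns. n \<le> (k::nat)) \<Longrightarrow> (\<Sum>n\<leftarrow>ns. min k n) = sum_list ns"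
  by (induction ns) (auto simp: min_absorb2)

lemma kernel_pow_eq:
  assumes X: "X \<in> carrier_mat d d" and H: "hermitian_mat X" and k: "k \<ge> 1"
  shows "mat_kernel (X ^\<^sub>m k) = mat_kernel X"
proof
  show "mat_kernel (X ^\<^sub>m k) \<subseteq> mat_kernel X"
    using herm_pow_kernel[OF X H k] X by (auto simp: mat_kernel_def)
  show "mat_kernel X \<subseteq> mat_kernel (X ^\<^sub>m k)"
  proof
    fix v assume "v \<in> mat_kernel X"
    hence v: "v \<in> carrier_vec d" "X *\<^sub>v v = 0\<^sub>v d" using X by (auto simp: mat_kernel_def)
    obtain j where j: "k = Suc j" using k by (cases k) auto
    have Xj: "X ^\<^sub>m j \<in> carrier_mat d d" using X by simp
    have "(X ^\<^sub>m k) *\<^sub>v v = (X ^\<^sub>m j * X) *\<^sub>v v" using j by simp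
    also have "\<dots> = (X ^\<^sub>m j) *\<^sub>v (X *\<^sub>v v)" by (rule assoc_mult_mat_vec[OF Xj X v(1)])
    also have "\<dots> = 0\<^sub>v d" unfolding v(2) using Xj
      by (intro eq_vecI) (auto simp: mult_mat_vec_def scalar_prod_def)
    finally show "v \<in> mat_kernel (X ^\<^sub>m k)" using v X by (auto simp: mat_kernel_def)
  qed
qed

lemma eig_structure:
  assumes X: "X \<in> carrier_mat d d" and H: "hermitian_mat X" and r: "vec_space.rank d X = 2"
  shows "\<exists>es B P Q. similar_mat_wit X B P Q \<and> upper_triangular B \<and> diag_mat B = es
     \<and> length es = d \<and> (\<forall>e\<in>set es. cnj e = e) \<and> length (filter (\<lambda>e. e \<noteq> 0) es) = 2"
proof -
  obtain as where as: "char_poly X = (\<Prod>a\<leftarrow>as. [:- a, 1:])" "length as = d"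
    using char_poly_factorized[OF X] by blast
  obtain n_as where jnf: "jordan_nf X n_as" using jordan_nf_exists[OF X as(1)] by blast
  define es where "es = jes n_as"
  have cp: "char_poly X = (\<Prod>e\<leftarrow>es. [:- e, 1:])"
    unfolding es_def jes_prod[symmetric] by (rule jordan_nf_char_poly[OF jnf])
  have len: "length es = d"
    using degree_monic_char_poly[OF X] degree_linear_factors[of uminus es] cp by simp
  have kd: "kernel_dim X = d - 2" using rank_nullity_mat[OF X] r by simp
  have d2: "d \<ge> 2" using rank_nullity_mat[OF X] r by simp
  have "dim_gen_eigenspace X 0 d = (\<Sum>n\<leftarrow>map fst [(n, e)\<leftarrow>n_as . e = 0]. min d n)"
    by (rule dim_gen_eigenspace[OF jnf])
  also have "\<dots> = sum_list (map fst [(n, e)\<leftarrow>n_as . e = 0])"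
    by (rule sum_list_min_eq) (use jes_le len in \<open>auto simp: es_def\<close>)
  also have "\<dots> = length (filter (\<lambda>e. e = 0) es)" unfolding es_def by (rule jes_count0[symmetric])
  finally have c0: "length (filter (\<lambda>e. e = 0) es) = dim_gen_eigenspace X 0 d" ..
  have cm: "char_matrix X 0 = X" unfolding char_matrix_def using X by (intro eq_matI) auto
  have "dim_gen_eigenspace X 0 d = kernel_dim (X ^\<^sub>m d)"
    unfolding dim_gen_eigenspace_def cm ..
  also have "\<dots> = kernel_dim X"
    unfolding kernel_dim_def using kernel_pow_eq[OF X H, of d] d2 X by simp
  finally have "length (filter (\<lambda>e. e = 0) es) = d - 2" using c0 kd by simp
  moreover have "length (filter (\<lambda>e. e = 0) es) + length (filter (\<lambda>e. e \<noteq> 0) es) = length es"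
    by (rule sum_length_filter_compl)
  ultimately have two: "length (filter (\<lambda>e. e \<noteq> 0) es) = 2" using len d2 by simp
  have real: "\<forall>e\<in>set es. cnj e = e"
  proof
    fix e assume "e \<in> set es"
    hence "poly (char_poly X) e = 0" unfolding cp
      by (induction es) (auto simp: poly_prod_list)
    hence "eigenvalue X e" using eigenvalue_root_char_poly[OF X] by simp
    thus "cnj e = e" by (rule herm_eig_real[OF X H])
  qed
  obtain B P Q where sd: "schur_decomposition X es = (B,P,Q)" by (cases "schur_decomposition X es") auto
  from schur_decomposition[OF X cp sd]
  have "similar_mat_wit X B P Q \<and> upper_triangular B \<and> diag_mat B = es" .
  thus ?thesis using len two real by blast
qed



lemma ut_mult:
  assumes A: "A \<in> carrier_mat n n" and B: "B \<in> carrier_mat n n"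
    and uA: "upper_triangular A" and uB: "upper_triangular B"
  shows "upper_triangular (A * B)" "\<And>i. i < n \<Longrightarrow> (A * B) $$ (i,i) = A $$ (i,i) * B $$ (i,i)"
proof -
  have a0: "\<And>i j. i < n \<Longrightarrow> j < i \<Longrightarrow> A $$ (i,j) = 0" using uA A unfolding upper_triangular_def by auto
  have b0: "\<And>i j. i < n \<Longrightarrow> j < i \<Longrightarrow> B $$ (i,j) = 0" using uB B unfolding upper_triangular_def by auto
  have ent: "\<And>i j. i < n \<Longrightarrow> j < n \<Longrightarrow> (A * B) $$ (i,j) = (\<Sum>k<n. A $$ (i,k) * B $$ (k,j))"
    using A B by (simp add: scalar_prod_def atLeast0LessThan)
  show "upper_triangular (A * B)" unfolding upper_triangular_def
  proof (intro allI impI)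
    fix i j assume i: "i < dim_row (A * B)" and j: "j < i"
    have i': "i < n" using i A by simp
    have "(A * B) $$ (i,j) = (\<Sum>k<n. A $$ (i,k) * B $$ (k,j))" using ent[OF i'] j i' by simp
    also have "\<dots> = 0"
    proof (rule sum.neutral, rule ballI)
      fix k assume k: "k \<in> {..<n}"
      show "A $$ (i,k) * B $$ (k,j) = 0"
      proof (cases "k < i")
        case True thus ?thesis using a0[OF i'] by simp
      next
        case False thus ?thesis using b0 k j by simp
      qed
    qed
    finally show "(A * B) $$ (i,j) = 0" .
  qed
  fix i assume i: "i < n"
  have "(A * B) $$ (i,i) = (\<Sum>k<n. A $$ (i,k) * B $$ (k,i))" using ent[OF i i] .
  also have "\<dots> = (\<Sum>k\<in>{i}. A $$ (i,k) * B $$ (k,i))"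
  proof (rule sum.mono_neutral_right)
    show "\<forall>k\<in>{..<n} - {i}. A $$ (i,k) * B $$ (k,i) = 0"
    proof
      fix k assume k: "k \<in> {..<n} - {i}"
      show "A $$ (i,k) * B $$ (k,i) = 0"
      proof (cases "k < i")
        case True thus ?thesis using a0[OF i] by simp
      next
        case False thus ?thesis using b0 k by simp
      qed
    qed
  qed (use i in auto)
  also have "\<dots> = A $$ (i,i) * B $$ (i,i)" by simp
  finally show "(A * B) $$ (i,i) = A $$ (i,i) * B $$ (i,i)" .
qed

lemma ut_pow:
  assumes B: "B \<in> carrier_mat n n" and uB: "upper_triangular B"
  shows "upper_triangular (B ^\<^sub>m k) \<and> (\<forall>i<n. (B ^\<^sub>m k) $$ (i,i) = B $$ (i,i) ^ k)"
proof (induction k)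
  case 0
  then show ?case using B by (auto simp: upper_triangular_def)
next
  case (Suc k)
  have Bk: "B ^\<^sub>m k \<in> carrier_mat n n" using B by simp
  show ?case using ut_mult[OF Bk B _ uB] Suc by (simp del: power_Suc add: power_Suc2)
qed

lemma mtrace_comm:
  assumes A: "A \<in> carrier_mat n m" and B: "B \<in> carrier_mat m n"
  shows "mtrace (A * B) = mtrace (B * A)"
proof -
  have "mtrace (A * B) = (\<Sum>i<n. \<Sum>j<m. A $$ (i,j) * B $$ (j,i))"
    unfolding mtrace_def using A B by (intro sum.cong) (auto simp: scalar_prod_def atLeast0LessThan)
  also have "\<dots> = (\<Sum>j<m. \<Sum>i<n. B $$ (j,i) * A $$ (i,j))"
    by (subst sum.swap) (simp add: mult.commute)
  also have "\<dots> = mtrace (B * A)"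
    unfolding mtrace_def using A B by (intro sum.cong) (auto simp: scalar_prod_def atLeast0LessThan)
  finally show ?thesis .
qed

lemma mtrace_sim:
  assumes w: "similar_mat_wit A B P Q" and A: "A \<in> carrier_mat n n"
  shows "mtrace A = mtrace B"
proof -
  from similar_mat_witD2[OF A w] have B: "B \<in> carrier_mat n n" and P: "P \<in> carrier_mat n n"
    and Q: "Q \<in> carrier_mat n n" and QP: "Q * P = 1\<^sub>m n" and e: "A = P * B * Q" by auto
  have "mtrace A = mtrace (P * (B * Q))" using e P B Q by (simp add: assoc_mult_mat)
  also have "\<dots> = mtrace ((B * Q) * P)" using P B Q by (intro mtrace_comm) auto
  also have "\<dots> = mtrace (B * (Q * P))" using P B Q by (simp add: assoc_mult_mat)
  also have "\<dots> = mtrace B" using QP B by simp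
  finally show ?thesis .
qed

lemma mtrace_ut_pow:
  assumes B: "B \<in> carrier_mat n n" and uB: "upper_triangular B"
  shows "mtrace (B ^\<^sub>m k) = sum_list (map (\<lambda>e. e ^ k) (diag_mat B))"
proof -
  have "mtrace (B ^\<^sub>m k) = (\<Sum>i<n. B $$ (i,i) ^ k)"
    unfolding mtrace_def using ut_pow[OF B uB, of k] B by (intro sum.cong) auto
  also have "\<dots> = sum_list (map (\<lambda>e. e ^ k) (diag_mat B))"
    unfolding diag_mat_def using B
    by (simp add: interv_sum_list_conv_sum_set_nat lessThan_atLeast0 comp_def)
  finally show ?thesis .
qed


lemma mat_pow_explicit:
  assumes X: "X \<in> carrier_mat d d"
  shows "X ^\<^sub>m 2 = X * X" "X ^\<^sub>m 3 = X * X * X" "X ^\<^sub>m 4 = X * X * X * X"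
proof -
  have 1: "X ^\<^sub>m 1 = X" using X by simp
  have 2: "X ^\<^sub>m 2 = X * X" using 1 by (simp add: numeral_2_eq_2)
  have 3: "X ^\<^sub>m 3 = X * X * X" using 2 by (simp add: numeral_3_eq_3 numeral_2_eq_2)
  have 4: "X ^\<^sub>m 4 = X * X * X * X" using 3 by (simp add: numeral_eq_Suc)
  show "X ^\<^sub>m 2 = X * X" "X ^\<^sub>m 3 = X * X * X" "X ^\<^sub>m 4 = X * X * X * X" using 2 3 4 by auto
qed

lemma mult_ent:
  assumes A: "A \<in> carrier_mat d d" and B: "B \<in> carrier_mat d d" and i: "i < d" and j: "j < d"
  shows "(A * B) $$ (i,j) = (\<Sum>k<d. A $$ (i,k) * B $$ (k,j))"
  using A B i j by (simp add: scalar_prod_def atLeast0LessThan)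

lemma mtrace_sq: assumes X: "X \<in> carrier_mat d d"
  shows "mtrace X = (\<Sum>a<d. X $$ (a,a))" using X by (simp add: mtrace_def)

lemma tr_pows:
  assumes X: "X \<in> carrier_mat d d"
  shows "tr1 X d = mtrace X" "tr2 X d = mtrace (X ^\<^sub>m 2)" "tr3 X d = mtrace (X ^\<^sub>m 3)"
    "tr4 X d = mtrace (X ^\<^sub>m 4)"
proof -
  have XX: "X * X \<in> carrier_mat d d" and XXX: "X * X * X \<in> carrier_mat d d"
    and XXXX: "X * X * X * X \<in> carrier_mat d d" using X by auto
  show "tr1 X d = mtrace X" unfolding tr1_def mtrace_sq[OF X] ..
  show "tr2 X d = mtrace (X ^\<^sub>m 2)" unfolding tr2_def mat_pow_explicit[OF X] mtrace_sq[OF XX]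
    by (intro sum.cong refl) (simp only: mult_ent[OF X X] lessThan_iff)
  have "mtrace (X ^\<^sub>m 3) = (\<Sum>a<d. \<Sum>c<d. \<Sum>b<d. X$$(a,b) * X$$(b,c) * X$$(c,a))"
    unfolding mat_pow_explicit[OF X] mtrace_sq[OF XXX]
  proof (intro sum.cong refl)
    fix a assume a: "a \<in> {..<d}"
    have "(X * X * X) $$ (a,a) = (\<Sum>c<d. (X * X) $$ (a,c) * X $$ (c,a))"
      using a by (simp only: mult_ent[OF XX X] lessThan_iff)
    also have "\<dots> = (\<Sum>c<d. (\<Sum>b<d. X$$(a,b) * X$$(b,c)) * X $$ (c,a))"
      using a by (intro sum.cong refl) (simp only: mult_ent[OF X X] lessThan_iff)
    also have "\<dots> = (\<Sum>c<d. \<Sum>b<d. X$$(a,b) * X$$(b,c) * X$$(c,a))"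
      by (simp only: sum_distrib_right)
    finally show "(X * X * X) $$ (a,a) = (\<Sum>c<d. \<Sum>b<d. X$$(a,b) * X$$(b,c) * X$$(c,a))" .
  qed
  also have "\<dots> = tr3 X d" unfolding tr3_def by (rule sum.cong[OF refl], rule sum.swap)
  finally show "tr3 X d = mtrace (X ^\<^sub>m 3)" ..
  have "mtrace (X ^\<^sub>m 4) = (\<Sum>a<d. \<Sum>e<d. \<Sum>c<d. \<Sum>b<d. X$$(a,b) * X$$(b,c) * X$$(c,e) * X$$(e,a))"
    unfolding mat_pow_explicit[OF X] mtrace_sq[OF XXXX]
  proof (intro sum.cong refl)
    fix a assume a: "a \<in> {..<d}"
    have "(X * X * X * X) $$ (a,a) = (\<Sum>e<d. (X * X * X) $$ (a,e) * X $$ (e,a))"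
      using a by (simp only: mult_ent[OF XXX X] lessThan_iff)
    also have "\<dots> = (\<Sum>e<d. (\<Sum>c<d. (X * X) $$ (a,c) * X $$ (c,e)) * X $$ (e,a))"
      using a by (intro sum.cong refl) (simp only: mult_ent[OF XX X] lessThan_iff)
    also have "\<dots> = (\<Sum>e<d. (\<Sum>c<d. (\<Sum>b<d. X$$(a,b) * X$$(b,c)) * X $$ (c,e)) * X $$ (e,a))"
    proof -
      have inner: "\<And>c. c < d \<Longrightarrow> (X * X) $$ (a,c) = (\<Sum>b<d. X$$(a,b) * X$$(b,c))"
        using a by (simp add: mult_ent[OF X X])
      show ?thesis by (simp add: inner)
    qed
    also have "\<dots> = (\<Sum>e<d. \<Sum>c<d. \<Sum>b<d. X$$(a,b) * X$$(b,c) * X$$(c,e) * X$$(e,a))"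
      by (simp only: sum_distrib_right)
    finally show "(X * X * X * X) $$ (a,a) = (\<Sum>e<d. \<Sum>c<d. \<Sum>b<d. X$$(a,b) * X$$(b,c) * X$$(c,e) * X$$(e,a))" .
  qed
  also have "\<dots> = tr4 X d"
    unfolding tr4_def by (subst sw1, subst sw2, subst sw1, rule refl)
  finally show "tr4 X d = mtrace (X ^\<^sub>m 4)" ..
qed

lemma proots_linprod: "proots (\<Prod>a\<leftarrow>L. [:- a, 1:]) = mset (L :: complex list)"
proof (induction L)
  case Nil then show ?case by simp
next
  case (Cons a L)
  have nz: "(\<Prod>a\<leftarrow>L. [:- a, 1:]) \<noteq> (0::complex poly)" by (auto simp: prod_list_zero_iff)
  have "proots (\<Prod>a\<leftarrow>a # L. [:- a, 1:]) = proots ([:- a, 1:] * (\<Prod>a\<leftarrow>L. [:- a, 1:]))" by simp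
  also have "\<dots> = proots [:- a, 1:] + proots (\<Prod>a\<leftarrow>L. [:- a, 1:])"
    by (rule proots_mult) (use nz in auto)
  also have "\<dots> = mset (a # L)" using Cons.IH by simp
  finally show ?case .
qed

lemma herm_tr2: 
  assumes X: "X \<in> carrier_mat d d" and H: "hermitian_mat X"
  shows "Re (tr2 X d) = (\<Sum>i<d. \<Sum>j<d. (cmod (X $$ (i,j)))^2)"
proof -
  have "tr2 X d = (\<Sum>i<d. \<Sum>j<d. complex_of_real ((cmod (X $$ (i,j)))^2))"
    unfolding tr2_def
  proof (intro sum.cong refl)
    fix i j assume "i \<in> {..<d}" "j \<in> {..<d}"
    hence ij: "i < d" "j < d" by auto
    have c: "X $$ (j,i) = cnj (X $$ (i,j))" by (rule herm_entry[OF X H ij(2) ij(1)])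
    show "X $$ (i,j) * X $$ (j,i) = complex_of_real ((cmod (X $$ (i,j)))^2)"
      by (simp only: c complex_norm_square)
  qed
  thus ?thesis by (simp only: Re_sum Re_complex_of_real)
qed



lemma key_identity0:
  fixes m q s :: real
  assumes s: "s^2 = 10"
  shows "45*(95+32*s) * m^3 - 2187*(m^3+4*m^2*q+2*m*q^2-3*q^3)
       = 9 * (9*q - (2+2*s) * m)^2 * (9*q - (2-4*s) * m)"
proof -
  have "9 * (9*q - (2+2*s) * m)^2 * (9*q - (2-4*s) * m) - (45*(95+32*s) * m^3 - 2187*(m^3+4*m^2*q+2*m*q^2-3*q^3))
     = (s^2-10)*((216+144*s)*m^3 - 972*m^2*q)"
    by (simp add: algebra_simps power2_eq_square power3_eq_cube)
  thus ?thesis using s by simp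
qed

lemma abs_sum_sq: fixes a b :: real
  shows "a*b \<ge> 0 \<Longrightarrow> (\<bar>a\<bar>+\<bar>b\<bar>)^2 = (a+b)^2" "a*b < 0 \<Longrightarrow> (\<bar>a\<bar>+\<bar>b\<bar>)^2 = (a-b)^2"
proof -
  have "(\<bar>a\<bar>+\<bar>b\<bar>)^2 = a^2 + b^2 + 2*\<bar>a*b\<bar>" by (simp add: power2_eq_square abs_mult algebra_simps)
  thus "a*b \<ge> 0 \<Longrightarrow> (\<bar>a\<bar>+\<bar>b\<bar>)^2 = (a+b)^2" "a*b < 0 \<Longrightarrow> (\<bar>a\<bar>+\<bar>b\<bar>)^2 = (a-b)^2"
    by (auto simp: power2_eq_square algebra_simps)
qed

lemma final_ineq:
  fixes a b :: real
  assumes a: "a \<noteq> 0" and b: "b \<noteq> 0"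
  shows "24 * (\<bar>a\<bar>+\<bar>b\<bar>)^2 * (a^4+a^3*b+a^2*b^2+a*b^3+b^4) / ((a^2+b^2) + (a+b)^2)^3
          \<le> 5/81*(95+32*sqrt 10)"
proof -
  define K where "K = 5/81*(95+32*sqrt 10)"
  define m where "m = a^2+a*b+b^2"
  have m2: "a^2+b^2+(a+b)^2 = 2*m" unfolding m_def by (simp add: power2_eq_square algebra_simps)
  have mpos: "m > 0"
  proof -
    have "m = (a + b/2)^2 + 3/4*b^2" unfolding m_def by (simp add: power2_eq_square algebra_simps)
    moreover have "b^2 > 0" using b by simp
    moreover have "(a+b/2)^2 \<ge> 0" by simp
    ultimately show ?thesis by linarith
  qed
  have K3: "K \<ge> 3" unfolding K_def by (simp add: real_sqrt_ge_zero)
  have D: "((a^2+b^2) + (a+b)^2)^3 = 8*m^3" using m2 by (simp add: power3_eq_cube)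
  have Dpos: "8*m^3 > 0" using mpos by simp
  have main: "24 * (\<bar>a\<bar>+\<bar>b\<bar>)^2 * (a^4+a^3*b+a^2*b^2+a*b^3+b^4) \<le> K * (8*m^3)"
  proof (cases "a*b \<ge> 0")
    case True
    define p where "p = a*b"
    define \<sigma> where "\<sigma> = a^2+b^2"
    have p0: "p \<ge> 0" using True p_def by simp
    have s0: "\<sigma> \<ge> 0" unfolding \<sigma>_def by simp
    have "24 * (\<bar>a\<bar>+\<bar>b\<bar>)^2 * (a^4+a^3*b+a^2*b^2+a*b^3+b^4) = 24*(\<sigma>+2*p)*(\<sigma>^2+p*\<sigma>-p^2)"
      unfolding abs_sum_sq(1)[OF True] p_def \<sigma>_def by (simp add: power2_eq_square power3_eq_cube power4_eq_xxxx algebra_simps)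
    also have "\<dots> = 3*(8*m^3) - 24*(2*p^2*\<sigma>+3*p^3)"
      unfolding m_def p_def \<sigma>_def by (simp add: power2_eq_square power3_eq_cube algebra_simps)
    also have "\<dots> \<le> 3*(8*m^3)"
    proof -
      have "2*p^2*\<sigma> + 3*p^3 \<ge> 0" using p0 s0 by simp
      thus ?thesis by (subst diff_le_eq) simp
    qed
    also have "\<dots> \<le> K*(8*m^3)" using K3 Dpos by (intro mult_right_mono) auto
    finally show ?thesis .
  next
    case False
    define q where "q = -(a*b)"
    have q0: "q > 0" using False q_def by simp
    have "24 * (\<bar>a\<bar>+\<bar>b\<bar>)^2 * (a^4+a^3*b+a^2*b^2+a*b^3+b^4) = 8*(3*(m^3+4*m^2*q+2*m*q^2-3*q^3))"
    proof -
      have ab2: "(\<bar>a\<bar>+\<bar>b\<bar>)^2 = (a-b)^2" using abs_sum_sq(2)[of a b] False by simp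
      show ?thesis unfolding ab2 m_def q_def
        by (simp add: power2_eq_square power3_eq_cube power4_eq_xxxx algebra_simps)
    qed
    also have "\<dots> \<le> 8*(K*m^3)"
    proof -
      define P where "P = m^3+4*m^2*q+2*m*q^2-3*q^3"
      have s: "(sqrt 10)^2 = (10::real)" by simp
      have iden: "45*(95+32*sqrt 10) * m^3 - 2187*P = 9 * (9*q - (2+2*sqrt 10) * m)^2 * (9*q - (2-4*sqrt 10) * m)"
        unfolding P_def by (rule key_identity0[OF s])
      have "9*q - (2-4*sqrt 10) * m \<ge> 0"
      proof -
        have "sqrt 10 \<ge> (1::real)" by simp
        hence "(2-4*sqrt 10) \<le> 0" by linarith
        hence "(2-4*sqrt 10) * m \<le> 0" using mpos by (simp add: mult_nonpos_nonneg)
        thus ?thesis using q0 by simp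
      qed
      hence "45*(95+32*sqrt 10) * m^3 - 2187*P \<ge> 0" unfolding iden by simp
      moreover have "45*(95+32*sqrt 10) * m^3 - 2187*P = 729 * (K*m^3 - 3*P)"
        unfolding K_def by (simp add: algebra_simps)
      ultimately have "729 * (K*m^3 - 3*P) \<ge> 0" by linarith
      hence "K*m^3 - 3*P \<ge> 0" by (simp add: zero_le_mult_iff)
      thus ?thesis unfolding P_def by simp
    qed
    also have "\<dots> = K * (8*m^3)" by simp
    finally show ?thesis .
  qed
  show ?thesis unfolding D K_def[symmetric] using main Dpos by (simp add: divide_le_eq)
qed

lemma traceless_val:
  fixes a b :: real
  assumes a: "a \<noteq> 0" and ab: "a + b = 0"
  shows "24 * (\<bar>a\<bar>+\<bar>b\<bar>)^2 * (a^4+a^3*b+a^2*b^2+a*b^3+b^4) / ((a^2+b^2) + (a+b)^2)^3 = 12"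
proof -
  have b: "b = -a" using ab by simp
  have "\<bar>a\<bar>^2 = a^2" by simp
  thus ?thesis using a unfolding b by (simp add: power2_eq_square power3_eq_cube power4_eq_xxxx field_simps)
qed



lemma len2: "length xs = 2 \<Longrightarrow> \<exists>a b. xs = [a,b]"
  by (cases xs; cases "tl xs"; auto simp: numeral_2_eq_2)

lemma real_of_cnj: "cnj z = z \<Longrightarrow> z = complex_of_real (Re z)"
  by (simp add: complex_eq_iff)

lemma summset_list: "(\<Sum>\<mu>\<in>#mset L. g \<mu>) = sum_list (map g L)"
  by (induction L) auto

lemma h4_id:
  fixes a b :: complex
  shows "((a+b)^4 + 6*(a+b)^2*(a^2+b^2) + 3*(a^2+b^2)^2 + 8*(a+b)*(a^3+b^3) + 6*(a^4+b^4))/24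
     = a^4+a^3*b+a^2*b^2+a*b^3+b^4"
proof -
  have "(a+b)^4 + 6*(a+b)^2*(a^2+b^2) + 3*(a^2+b^2)^2 + 8*(a+b)*(a^3+b^3) + 6*(a^4+b^4)
     = 24 * (a^4+a^3*b+a^2*b^2+a*b^3+b^4)"
    by (simp add: algebra_simps power2_eq_square power3_eq_cube power4_eq_xxxx)
  thus ?thesis by simp
qed

lemma reduce:
  assumes X: "X \<in> carrier_mat d d" and H: "hermitian_mat X" and r: "vec_space.rank d X = 2"
  shows "\<exists>\<alpha> \<beta>::real. \<alpha> \<noteq> 0 \<and> \<beta> \<noteq> 0 \<and> trace_norm X = \<bar>\<alpha>\<bar>+\<bar>\<beta>\<bar> \<and> (hs_norm X)^2 = \<alpha>^2+\<beta>^2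
     \<and> mtrace X = complex_of_real (\<alpha>+\<beta>)
     \<and> Re (mtrace (P_Sym4 d * tensor4 d X)) = \<alpha>^4+\<alpha>^3*\<beta>+\<alpha>^2*\<beta>^2+\<alpha>*\<beta>^3+\<beta>^4"
proof -
  obtain es B P Q where w: "similar_mat_wit X B P Q" and ut: "upper_triangular B"
    and dB: "diag_mat B = es" and len: "length es = d" and real: "\<forall>e\<in>set es. cnj e = e"
    and two: "length (filter (\<lambda>e. e \<noteq> 0) es) = 2"
    using eig_structure[OF X H r] by blast
  have B: "B \<in> carrier_mat d d" using similar_mat_witD2[OF X w] by auto
  have "length (filter (\<lambda>e. e \<noteq> 0) es) \<le> length es" by (rule length_filter_le)
  hence d0: "0 < d" using two len by simp
  obtain a b where fab: "filter (\<lambda>e. e \<noteq> 0) es = [a,b]" using len2[OF two] by blast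
  have ab: "a \<in> set es" "b \<in> set es" "a \<noteq> 0" "b \<noteq> 0"
    using arg_cong[OF fab, of set] by auto
  have sumf: "sum_list (map f es) = f a + f b" if f0: "f 0 = 0" for f :: "complex \<Rightarrow> 'b::monoid_add"
  proof -
    have "sum_list (map f (filter (\<lambda>e. e \<noteq> 0) es)) = sum_list (map f es)"
      by (rule sum_list_map_filter) (use f0 in auto)
    thus ?thesis unfolding fab by simp
  qed
  define \<alpha> where "\<alpha> = Re a"
  define \<beta> where "\<beta> = Re b"
  have a_eq: "a = complex_of_real \<alpha>" unfolding \<alpha>_def using real ab(1) real_of_cnj by blast
  have b_eq: "b = complex_of_real \<beta>" unfolding \<beta>_def using real ab(2) real_of_cnj by blast
  have \<alpha>0: "\<alpha> \<noteq> 0" using ab(3) a_eq by auto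
  have \<beta>0: "\<beta> \<noteq> 0" using ab(4) b_eq by auto
  have mpow: "mtrace (X ^\<^sub>m k) = a^k + b^k" if k: "k \<ge> 1" for k
  proof -
    have Xk: "X ^\<^sub>m k \<in> carrier_mat d d" using X by simp
    have "mtrace (X ^\<^sub>m k) = mtrace (B ^\<^sub>m k)"
      by (rule mtrace_sim[OF similar_mat_wit_pow[OF w] Xk])
    also have "\<dots> = sum_list (map (\<lambda>e. e ^ k) es)" using mtrace_ut_pow[OF B ut] dB by simp
    also have "\<dots> = a^k + b^k" by (rule sumf) (use k in simp)
    finally show ?thesis .
  qed
  have X1: "X ^\<^sub>m 1 = X" using X by simp
  have t1: "tr1 X d = a + b" using tr_pows(1)[OF X] mpow[of 1] X1 by simp
  have t2: "tr2 X d = a^2 + b^2" using tr_pows(2)[OF X] mpow[of 2] by simp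
  have t3: "tr3 X d = a^3 + b^3" using tr_pows(3)[OF X] mpow[of 3] by simp
  have t4: "tr4 X d = a^4 + b^4" using tr_pows(4)[OF X] mpow[of 4] by simp
  have PS: "mtrace (P_Sym4 d * tensor4 d X) = complex_of_real (\<alpha>^4+\<alpha>^3*\<beta>+\<alpha>^2*\<beta>^2+\<alpha>*\<beta>^3+\<beta>^4)"
  proof -
    have "mtrace (P_Sym4 d * tensor4 d X)
       = (tr1 X d ^ 4 + 6 * tr1 X d ^ 2 * tr2 X d + 3 * tr2 X d ^ 2 + 8 * tr1 X d * tr3 X d + 6 * tr4 X d) / 24"
      unfolding trace_PSym[OF d0] sum_FF ..
    also have "\<dots> = a^4+a^3*b+a^2*b^2+a*b^3+b^4"
      unfolding t1 t2 t3 t4 by (rule h4_id)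
    finally show ?thesis unfolding a_eq b_eq by simp
  qed
  have TR: "mtrace X = complex_of_real (\<alpha>+\<beta>)" using tr_pows(1)[OF X] t1 a_eq b_eq by simp
  have HS: "(hs_norm X)^2 = \<alpha>^2+\<beta>^2"
  proof -
    have nn: "(\<Sum>i<d. \<Sum>j<d. (cmod (X $$ (i,j)))^2) \<ge> 0" by (intro sum_nonneg) auto
    have "(hs_norm X)^2 = (\<Sum>i<d. \<Sum>j<d. (cmod (X $$ (i,j)))^2)"
      unfolding hs_norm_def using X nn by simp
    also have "\<dots> = Re (tr2 X d)" by (rule herm_tr2[OF X H, symmetric])
    also have "\<dots> = \<alpha>^2+\<beta>^2" unfolding t2 a_eq b_eq by simp
    finally show ?thesis .
  qed
  have TN: "trace_norm X = \<bar>\<alpha>\<bar>+\<bar>\<beta>\<bar>"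
  proof -
    have adj: "mat_adjoint X * X = X ^\<^sub>m 2"
      using H mat_pow_explicit(1)[OF X] unfolding hermitian_mat_def by simp
    have sim: "similar_mat (X ^\<^sub>m 2) (B ^\<^sub>m 2)"
      using similar_mat_wit_pow[OF w] unfolding similar_mat_def by blast
    have B2: "B ^\<^sub>m 2 \<in> carrier_mat d d" using B by simp
    have ut2: "upper_triangular (B ^\<^sub>m 2)" using ut_pow[OF B ut] by blast
    have diag2: "diag_mat (B ^\<^sub>m 2) = map (\<lambda>e. e^2) es"
      using ut_pow[OF B ut, of 2] B dB[symmetric] unfolding diag_mat_def by simp
    have "char_poly (mat_adjoint X * X) = (\<Prod>x\<leftarrow>map (\<lambda>e. e^2) es. [:- x, 1:])"
      unfolding adj char_poly_similar[OF sim] char_poly_upper_triangular[OF B2 ut2] diag2 ..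
    hence "proots (char_poly (mat_adjoint X * X)) = mset (map (\<lambda>e. e^2) es)"
      by (simp only: proots_linprod)
    hence "trace_norm X = (\<Sum>\<mu>\<in>#mset (map (\<lambda>e. e^2) es). sqrt (Re \<mu>))"
      unfolding trace_norm_def by (simp only:)
    also have "\<dots> = sum_list (map (\<lambda>\<mu>. sqrt (Re \<mu>)) (map (\<lambda>e. e^2) es))"
      by (rule summset_list)
    also have "\<dots> = sum_list (map (\<lambda>e. sqrt (Re (e^2))) es)" by (simp add: comp_def)
    also have "\<dots> = sqrt (Re (a^2)) + sqrt (Re (b^2))" by (rule sumf) simp
    also have "\<dots> = \<bar>\<alpha>\<bar>+\<bar>\<beta>\<bar>" unfolding a_eq b_eq by (simp flip: of_real_power)
    finally show ?thesis .
  qed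
  show ?thesis using \<alpha>0 \<beta>0 TN HS TR PS by auto
qed

theorem mainTheorem10:
  fixes d :: nat and X :: "complex mat"
  assumes "X \<in> carrier_mat d d"
    and "hermitian_mat X"
    and "vec_space.rank d X = 2"
  shows "24 * (trace_norm X)^2 * Re (mtrace (P_Sym4 d * tensor4 d X))
            / ((hs_norm X)^2 + (Re (mtrace X))^2) ^ 3
          \<le> 5 / 81 * (95 + 32 * sqrt 10)
       \<and> (mtrace X = 0 \<longrightarrow>
         24 * (trace_norm X)^2 * Re (mtrace (P_Sym4 d * tensor4 d X))
            / ((hs_norm X)^2 + (Re (mtrace X))^2) ^ 3 = 12)"
proof -
  obtain \<alpha> \<beta> :: real where a0: "\<alpha> \<noteq> 0" and b0: "\<beta> \<noteq> 0" and TN: "trace_norm X = \<bar>\<alpha>\<bar>+\<bar>\<beta>\<bar>"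
    and HS: "(hs_norm X)^2 = \<alpha>^2+\<beta>^2" and TR: "mtrace X = complex_of_real (\<alpha>+\<beta>)"
    and PS: "Re (mtrace (P_Sym4 d * tensor4 d X)) = \<alpha>^4+\<alpha>^3*\<beta>+\<alpha>^2*\<beta>^2+\<alpha>*\<beta>^3+\<beta>^4"
    using reduce[OF assms] by blast
  have RT: "Re (mtrace X) = \<alpha> + \<beta>" using TR by simp
  show ?thesis unfolding TN HS RT PS
  proof
    show "24 * (\<bar>\<alpha>\<bar>+\<bar>\<beta>\<bar>)^2 * (\<alpha>^4+\<alpha>^3*\<beta>+\<alpha>^2*\<beta>^2+\<alpha>*\<beta>^3+\<beta>^4) / ((\<alpha>^2+\<beta>^2) + (\<alpha>+\<beta>)^2)^3
          \<le> 5/81*(95+32*sqrt 10)" by (rule final_ineq[OF a0 b0])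
    show "mtrace X = 0 \<longrightarrow> 24 * (\<bar>\<alpha>\<bar>+\<bar>\<beta>\<bar>)^2 * (\<alpha>^4+\<alpha>^3*\<beta>+\<alpha>^2*\<beta>^2+\<alpha>*\<beta>^3+\<beta>^4) / ((\<alpha>^2+\<beta>^2) + (\<alpha>+\<beta>)^2)^3 = 12"
    proof
      assume h: "mtrace X = 0"
      have "complex_of_real (\<alpha> + \<beta>) = 0" using TR h by argo
      hence "\<alpha> + \<beta> = 0" by (simp only: of_real_eq_0_iff)
      thus "24 * (\<bar>\<alpha>\<bar>+\<bar>\<beta>\<bar>)^2 * (\<alpha>^4+\<alpha>^3*\<beta>+\<alpha>^2*\<beta>^2+\<alpha>*\<beta>^3+\<beta>^4) / ((\<alpha>^2+\<beta>^2) + (\<alpha>+\<beta>)^2)^3 = 12"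
        by (rule traceless_val[OF a0])
    qed
  qed
qed


end
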